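(* Let $S$ be a regular semigroup. The following are equivalent: (1) $I^{2}=I$ for every interior ideal $I$ of $S$; (2) $I_1\cap I_2=I_1I_2\cap I_2I_1$ for all interior ideals $I_1,I_2$ of $S$; (3) every interior ideal of $S$ is semiprime; (4) every proper interior ideal of $S$ is the intersection of the irreducible semiprime interior ideals of $S$ which contain it.
   Context: A semigroup $S$ is regular if for every $a\in S$ there is $x\in S$ with $a=axa$. A subsemigroup $I$ of $S$ (non-empty with $II\subseteq I$) is an interior ideal if $SIS\subseteq I$. For subsets $A,B$, $AB=\{ab:a\in A,b\in B\}$ and $A^2=AA$. An interior ideal $I$ is semiprime if for every interior ideal $A$ of $S$, $A^{2}\subseteq I$ implies $A\subseteq I$. It is irreducible if for all interior ideals $I_1,I_2$ of $S$, $I_1\cap I_2=I$ implies $I_1=I$ or $I_2=I$. *)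

theory Defs
  imports Main
begin

text \<open>The semigroup S is the whole type 'a (class semigroup_mult).\<close>

definition setmult :: "'a::semigroup_mult set \<Rightarrow> 'a set \<Rightarrow> 'a set" (infixl "\<cdot>\<^sub>s" 70) where
  "A \<cdot>\<^sub>s B = {a * b | a b. a \<in> A \<and> b \<in> B}"

definition regular_semigroup :: "'a::semigroup_mult itself \<Rightarrow> bool" where
  "regular_semigroup _ \<longleftrightarrow> (\<forall>a::'a. \<exists>x. a = a * x * a)"

definition interior_ideal :: "'a::semigroup_mult set \<Rightarrow> bool" where
  "interior_ideal I \<longleftrightarrow> I \<noteq> {} \<and> I \<cdot>\<^sub>s I \<subseteq> I \<and> UNIV \<cdot>\<^sub>s I \<cdot>\<^sub>s UNIV \<subseteq> I"

definition semiprime_ii :: "'a::semigroup_mult set \<Rightarrow> bool" where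
  "semiprime_ii I \<longleftrightarrow> interior_ideal I \<and>
     (\<forall>A. interior_ideal A \<longrightarrow> A \<cdot>\<^sub>s A \<subseteq> I \<longrightarrow> A \<subseteq> I)"

definition irreducible_ii :: "'a::semigroup_mult set \<Rightarrow> bool" where
  "irreducible_ii I \<longleftrightarrow> interior_ideal I \<and>
     (\<forall>I1 I2. interior_ideal I1 \<longrightarrow> interior_ideal I2 \<longrightarrow> I1 \<inter> I2 = I \<longrightarrow> I1 = I \<or> I2 = I)"

end

theory Submission
  imports Defs
begin

lemma ii_mem: "interior_ideal I \<Longrightarrow> s \<in> I \<Longrightarrow> t * s * u \<in> I"
  unfolding interior_ideal_def setmult_def by blast

lemma ii_mul: "interior_ideal I \<Longrightarrow> s \<in> I \<Longrightarrow> t \<in> I \<Longrightarrow> s * t \<in> I"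
  unfolding interior_ideal_def setmult_def by blast

lemma reg_ex: "regular_semigroup TYPE('a::semigroup_mult) \<Longrightarrow> \<exists>x. (a::'a) = a * x * a"
  unfolding regular_semigroup_def by blast

lemma left_mem:
  assumes r: "regular_semigroup TYPE('a::semigroup_mult)" and I: "interior_ideal I" and a: "(a::'a) \<in> I"
  shows "s * a \<in> I"
proof -
  obtain x where x: "a = a * x * a" using reg_ex[OF r] by blast
  have "s * a = s * (a * x * a)" using x by (rule arg_cong)
  also have "\<dots> = s * a * (x * a)" by (simp add: mult.assoc)
  finally have "s * a = s * a * (x * a)" .
  thus ?thesis using ii_mem[OF I a] by metis
qed

lemma right_mem:
  assumes r: "regular_semigroup TYPE('a::semigroup_mult)" and I: "interior_ideal I" and a: "(a::'a) \<in> I"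
  shows "a * s \<in> I"
proof -
  obtain x where x: "a = a * x * a" using reg_ex[OF r] by blast
  have "a * s = (a * x * a) * s" using x by (rule arg_cong)
  thus ?thesis using ii_mem[OF I a] by metis
qed

lemma prod_eq:
  assumes r: "regular_semigroup TYPE('a::semigroup_mult)" and I: "interior_ideal I" and J: "interior_ideal J"
  shows "I \<cdot>\<^sub>s J = I \<inter> (J::'a set)"
proof
  show "I \<cdot>\<^sub>s J \<subseteq> I \<inter> J"
    unfolding setmult_def using left_mem[OF r J] right_mem[OF r I] by blast
  show "I \<inter> J \<subseteq> I \<cdot>\<^sub>s J"
  proof
    fix a assume a: "a \<in> I \<inter> J"
    obtain x where x: "a = a * x * a" using reg_ex[OF r] by blast
    have "x * a \<in> J" using left_mem[OF r J] a by blast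
    moreover have "a = a * (x * a)" using x[unfolded mult.assoc] .
    ultimately show "a \<in> I \<cdot>\<^sub>s J" unfolding setmult_def using a by blast
  qed
qed

lemma all_sp:
  assumes r: "regular_semigroup TYPE('a::semigroup_mult)" and I: "interior_ideal (I::'a set)"
  shows "semiprime_ii I"
  unfolding semiprime_ii_def using I prod_eq[OF r] by auto

lemma chain_ideal:
  assumes I: "interior_ideal (I::'a::semigroup_mult set)"
    and C: "\<forall>X\<in>C. interior_ideal X \<and> I \<subseteq> X" and ch: "\<forall>X\<in>C. \<forall>Y\<in>C. X \<subseteq> Y \<or> Y \<subseteq> X"
  shows "interior_ideal (I \<union> \<Union>C)"
proof -
  have ne: "I \<union> \<Union>C \<noteq> {}" using I unfolding interior_ideal_def by blast
  have m: "s * t \<in> I \<union> \<Union>C" if hs: "s \<in> I \<union> \<Union>C" and ht: "t \<in> I \<union> \<Union>C" for s t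
  proof -
    obtain X where X: "s \<in> X" "X = I \<or> X \<in> C" using hs by blast
    obtain Y where Y: "t \<in> Y" "Y = I \<or> Y \<in> C" using ht by blast
    have iX: "interior_ideal X" using X C I by blast
    have iY: "interior_ideal Y" using Y C I by blast
    have "X \<subseteq> Y \<or> Y \<subseteq> X" using X Y C ch by blast
    then show ?thesis
    proof
      assume "X \<subseteq> Y" then have "s * t \<in> Y" using ii_mul[OF iY] X Y by blast
      then show ?thesis using Y by blast
    next
      assume "Y \<subseteq> X" then have "s * t \<in> X" using ii_mul[OF iX] X Y by blast
      then show ?thesis using X by blast
    qed
  qed
  have e: "u * s * v \<in> I \<union> \<Union>C" if hs: "s \<in> I \<union> \<Union>C" for s u v
  proof -
    obtain X where X: "s \<in> X" "X = I \<or> X \<in> C" using hs by blast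
    have iX: "interior_ideal X" using X C I by blast
    show ?thesis using ii_mem[OF iX X(1)] X by blast
  qed
  have s1: "(I \<union> \<Union>C) \<cdot>\<^sub>s (I \<union> \<Union>C) \<subseteq> I \<union> \<Union>C"
  proof
    fix z assume "z \<in> (I \<union> \<Union>C) \<cdot>\<^sub>s (I \<union> \<Union>C)"
    then obtain s t where "z = s * t" "s \<in> I \<union> \<Union>C" "t \<in> I \<union> \<Union>C"
      unfolding setmult_def by blast
    then show "z \<in> I \<union> \<Union>C" using m by simp
  qed
  have s2: "UNIV \<cdot>\<^sub>s (I \<union> \<Union>C) \<cdot>\<^sub>s UNIV \<subseteq> I \<union> \<Union>C"
  proof
    fix z assume "z \<in> UNIV \<cdot>\<^sub>s (I \<union> \<Union>C) \<cdot>\<^sub>s UNIV"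
    then obtain w v where "z = w * v" "w \<in> UNIV \<cdot>\<^sub>s (I \<union> \<Union>C)"
      unfolding setmult_def by blast
    then obtain u s where "z = u * s * v" "s \<in> I \<union> \<Union>C"
      unfolding setmult_def by blast
    then show "z \<in> I \<union> \<Union>C" using e by simp
  qed
  show ?thesis unfolding interior_ideal_def using ne s1 s2 by blast
qed

lemma irr_exists:
  assumes I: "interior_ideal (I::'a::semigroup_mult set)" and a: "a \<notin> I"
  shows "\<exists>J. irreducible_ii J \<and> I \<subseteq> J \<and> a \<notin> J"
proof -
  define A where "A = {J. interior_ideal J \<and> I \<subseteq> J \<and> a \<notin> J}"
  have Amem: "\<And>J. J \<in> A \<longleftrightarrow> interior_ideal J \<and> I \<subseteq> J \<and> a \<notin> J"
    unfolding A_def by simp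
  have "\<forall>C\<in>chains A. \<exists>U\<in>A. \<forall>X\<in>C. X \<subseteq> U"
  proof
    fix C assume C: "C \<in> chains A"
    then have CA: "C \<subseteq> A" unfolding chains_def by simp
    from C have ch: "\<forall>X\<in>C. \<forall>Y\<in>C. X \<subseteq> Y \<or> Y \<subseteq> X"
      unfolding chains_def chain_subset_def by simp
    have CC: "\<forall>X\<in>C. interior_ideal X \<and> I \<subseteq> X"
    proof
      fix X assume "X \<in> C"
      then have "X \<in> A" using CA by (rule subsetD[rotated])
      then show "interior_ideal X \<and> I \<subseteq> X" using Amem by simp
    qed
    have "interior_ideal (I \<union> \<Union>C)"
      by (rule chain_ideal[OF I CC ch])
    moreover have "a \<notin> \<Union>C"
    proof
      assume "a \<in> \<Union>C"
      then obtain X where "X \<in> C" "a \<in> X" by blast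
      then have "X \<in> A" using CA by blast
      then show False using \<open>a \<in> X\<close> Amem by simp
    qed
    ultimately have U: "I \<union> \<Union>C \<in> A" using a Amem by simp
    have "\<forall>X\<in>C. X \<subseteq> I \<union> \<Union>C" by blast
    then show "\<exists>U\<in>A. \<forall>X\<in>C. X \<subseteq> U" using U by blast
  qed
  from Zorn_Lemma2[OF this] obtain M where M: "M \<in> A" and mx: "\<forall>X\<in>A. M \<subseteq> X \<longrightarrow> X = M"
    by blast
  have Mi: "interior_ideal M" "I \<subseteq> M" "a \<notin> M" using M Amem by simp_all
  have "irreducible_ii M"
    unfolding irreducible_ii_def
  proof (intro conjI allI impI)
    show "interior_ideal M" by (rule Mi(1))
    fix I1 I2 assume i1: "interior_ideal I1" and i2: "interior_ideal I2" and eq: "I1 \<inter> I2 = M"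
    show "I1 = M \<or> I2 = M"
    proof (rule ccontr)
      assume n: "\<not> (I1 = M \<or> I2 = M)"
      have s1: "M \<subseteq> I1" "M \<subseteq> I2" using eq by auto
      have "I1 \<notin> A" using mx s1(1) n by auto
      then have "a \<in> I1" using i1 s1(1) Mi(2) Amem by auto
      have "I2 \<notin> A" using mx s1(2) n by auto
      then have "a \<in> I2" using i2 s1(2) Mi(2) Amem by auto
      then show False using \<open>a \<in> I1\<close> eq Mi(3) by auto
    qed
  qed
  then show ?thesis using Mi by blast
qed

lemma triv4: "A \<Longrightarrow> B \<Longrightarrow> C \<Longrightarrow> D \<Longrightarrow> (A = B) \<and> (A = C) \<and> (A = D)"
  by blast

theorem mainTheorem12:
  assumes "regular_semigroup TYPE('a::semigroup_mult)"
  shows "((\<forall>I::'a set. interior_ideal I \<longrightarrow> I \<cdot>\<^sub>s I = I)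
          \<longleftrightarrow> (\<forall>I1 I2::'a set. interior_ideal I1 \<longrightarrow> interior_ideal I2 \<longrightarrow>
                 I1 \<inter> I2 = (I1 \<cdot>\<^sub>s I2) \<inter> (I2 \<cdot>\<^sub>s I1)))
       \<and> ((\<forall>I::'a set. interior_ideal I \<longrightarrow> I \<cdot>\<^sub>s I = I)
          \<longleftrightarrow> (\<forall>I::'a set. interior_ideal I \<longrightarrow> semiprime_ii I))
       \<and> ((\<forall>I::'a set. interior_ideal I \<longrightarrow> I \<cdot>\<^sub>s I = I)
          \<longleftrightarrow> (\<forall>I::'a set. interior_ideal I \<longrightarrow> I \<noteq> UNIV \<longrightarrow>
                 I = \<Inter>{J. irreducible_ii J \<and> semiprime_ii J \<and> I \<subseteq> J}))"
proof -
  note r = assms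
  have p1: "\<forall>I::'a set. interior_ideal I \<longrightarrow> I \<cdot>\<^sub>s I = I" using prod_eq[OF r] by auto
  have p2: "\<forall>I1 I2::'a set. interior_ideal I1 \<longrightarrow> interior_ideal I2 \<longrightarrow>
                 I1 \<inter> I2 = (I1 \<cdot>\<^sub>s I2) \<inter> (I2 \<cdot>\<^sub>s I1)" using prod_eq[OF r] by auto
  have p3: "\<forall>I::'a set. interior_ideal I \<longrightarrow> semiprime_ii I" using all_sp[OF r] by blast
  have p4: "\<forall>I::'a set. interior_ideal I \<longrightarrow> I \<noteq> UNIV \<longrightarrow>
                 I = \<Inter>{J. irreducible_ii J \<and> semiprime_ii J \<and> I \<subseteq> J}"
  proof (intro allI impI equalityI)
    fix I :: "'a set" assume I: "interior_ideal I"
    show "I \<subseteq> \<Inter>{J. irreducible_ii J \<and> semiprime_ii J \<and> I \<subseteq> J}" by blast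
    show "\<Inter>{J. irreducible_ii J \<and> semiprime_ii J \<and> I \<subseteq> J} \<subseteq> I"
    proof
      fix a assume a: "a \<in> \<Inter>{J. irreducible_ii J \<and> semiprime_ii J \<and> I \<subseteq> J}"
      show "a \<in> I"
      proof (rule ccontr)
        assume "a \<notin> I"
        then obtain J where J: "irreducible_ii J" "I \<subseteq> J" "a \<notin> J" using irr_exists[OF I] by blast
        have "semiprime_ii J" using all_sp[OF r] J(1) unfolding irreducible_ii_def by blast
        then show False using a J by blast
      qed
    qed
  qed
  show ?thesis by (rule triv4[OF p1 p2 p3 p4])
qed

end
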